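(* Let $m\ge 1$ and let $u,v,p,q\in\mathbb{R}[x,y,z,w]$ be homogeneous polynomials, all of degree $m$, such that $yp=zv$ and $yq=wv$. Define $F:\mathbb{R}^4\to\mathbb{R}^4$ by $F(x,y,z,w)=(u,v,p,q)$. Then at every point of $\mathbb{R}^4$ with $y\neq 0$, $$|J(F)| = \frac{m\,v^2\,(v\,u_x-u\,v_x)}{y^3},$$ where $|J(F)|$ is the determinant of the Jacobian matrix of $F$ and subscripts denote partial derivatives.
   Context: For $F=(F_1,F_2,F_3,F_4):\mathbb{R}^4\to\mathbb{R}^4$ in the variables $(x_1,x_2,x_3,x_4)=(x,y,z,w)$, $J(F)$ denotes the $4\times 4$ matrix $[\partial F_i/\partial x_j]$ and $|J(F)|$ its determinant. *)

theory Defs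
  imports "HOL-Analysis.Analysis"
begin

text \<open>Points of R^4 are vectors X :: real^4 with coordinates
  x = X$1, y = X$2, z = X$3, w = X$4.\<close>

definition hom_poly4 :: "nat \<Rightarrow> (real^4 \<Rightarrow> real) \<Rightarrow> bool" where
  "hom_poly4 m f \<longleftrightarrow>
     (\<exists>S :: (nat \<times> nat \<times> nat \<times> nat) set. \<exists>c :: nat \<times> nat \<times> nat \<times> nat \<Rightarrow> real.
        finite S \<and> (\<forall>(a,b,k,l)\<in>S. a + b + k + l = m) \<and>
        (\<forall>X. f X = (\<Sum>(a,b,k,l)\<in>S. c (a,b,k,l) * (X$1)^a * (X$2)^b * (X$3)^k * (X$4)^l)))"

definition partial4 :: "(real^4 \<Rightarrow> real) \<Rightarrow> 4 \<Rightarrow> real^4 \<Rightarrow> real" where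
  "partial4 f j X = deriv (\<lambda>t. f (X + t *\<^sub>R axis j 1)) 0"

definition jacobian4 :: "(real^4 \<Rightarrow> real^4) \<Rightarrow> real^4 \<Rightarrow> real^4^4" where
  "jacobian4 F X = (\<chi> i j. partial4 (\<lambda>Y. F Y $ i) j X)"

end

theory Submission
  imports Defs
begin

lemma det_4:
  "det (A::'a::comm_ring_1^4^4) =
 A$1$1*(A$2$2*A$3$3*A$4$4 + A$2$3*A$3$4*A$4$2 + A$2$4*A$3$2*A$4$3 - A$2$2*A$3$4*A$4$3 - A$2$3*A$3$2*A$4$4 - A$2$4*A$3$3*A$4$2)
-A$1$2*(A$2$1*A$3$3*A$4$4 + A$2$3*A$3$4*A$4$1 + A$2$4*A$3$1*A$4$3 - A$2$1*A$3$4*A$4$3 - A$2$3*A$3$1*A$4$4 - A$2$4*A$3$3*A$4$1)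
+A$1$3*(A$2$1*A$3$2*A$4$4 + A$2$2*A$3$4*A$4$1 + A$2$4*A$3$1*A$4$2 - A$2$1*A$3$4*A$4$2 - A$2$2*A$3$1*A$4$4 - A$2$4*A$3$2*A$4$1)
-A$1$4*(A$2$1*A$3$2*A$4$3 + A$2$2*A$3$3*A$4$1 + A$2$3*A$3$1*A$4$2 - A$2$1*A$3$3*A$4$2 - A$2$2*A$3$1*A$4$3 - A$2$3*A$3$2*A$4$1)"
proof -
  have f1: "finite {2::4, 3, 4}" "1 \<notin> {2::4, 3, 4}" by auto
  have f2: "finite {3::4, 4}" "2 \<notin> {3::4, 4}" by auto
  have f3: "finite {4::4}" "3 \<notin> {4::4}" by auto
  show ?thesis
    unfolding det_def UNIV_4
    unfolding sum_over_permutations_insert[OF f1]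
    unfolding sum_over_permutations_insert[OF f2]
    unfolding sum_over_permutations_insert[OF f3]
    unfolding permutes_sing
    by (simp add: sign_swap_id permutation_swap_id sign_compose permutation_compose sign_id swap_id_eq algebra_simps)
qed
lemma hom_diff:
  assumes "hom_poly4 m f" shows "f differentiable (at X)"
proof -
  obtain S c where S: "finite S" "\<forall>X. f X = (\<Sum>(a,b,k,l)\<in>S. c (a,b,k,l) * (X$1)^a * (X$2)^b * (X$3)^k * (X$4)^l)"
    using assms unfolding hom_poly4_def by blast
  have "f = (\<lambda>X. \<Sum>(a,b,k,l)\<in>S. c (a,b,k,l) * (X$1)^a * (X$2)^b * (X$3)^k * (X$4)^l)"
    using S by auto
  moreover have "(\<lambda>X. \<Sum>(a,b,k,l)\<in>S. c (a,b,k,l) * (X$1)^a * (X$2)^b * (X$3)^k * (X$4)^l) differentiable (at X)"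
    unfolding case_prod_beta
    by (intro differentiable_sum differentiable_mult differentiable_power differentiable_const
         bounded_linear_imp_differentiable bounded_linear_vec_nth ballI S(1))
  ultimately show ?thesis by simp
qed

lemma hom_scale:
  assumes "hom_poly4 m f" shows "f (t *\<^sub>R X) = t^m * f X"
proof -
  obtain S c where S: "finite S" "\<forall>(a,b,k,l)\<in>S. a + b + k + l = m" "\<forall>X. f X = (\<Sum>(a,b,k,l)\<in>S. c (a,b,k,l) * (X$1)^a * (X$2)^b * (X$3)^k * (X$4)^l)"
    using assms unfolding hom_poly4_def by blast
  have "f (t *\<^sub>R X) = (\<Sum>(a,b,k,l)\<in>S. c (a,b,k,l) * ((t *\<^sub>R X)$1)^a * ((t *\<^sub>R X)$2)^b * ((t *\<^sub>R X)$3)^k * ((t *\<^sub>R X)$4)^l)"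
    using S(3) by blast
  also have "\<dots> = (\<Sum>(a,b,k,l)\<in>S. t^m * (c (a,b,k,l) * (X$1)^a * (X$2)^b * (X$3)^k * (X$4)^l))"
  proof (rule sum.cong[OF refl], clarify)
    fix a b k l assume "(a,b,k,l) \<in> S"
    then have "m = a+b+k+l" using S(2) by auto
    then show "c (a, b, k, l) * ((t *\<^sub>R X) $ 1) ^ a * ((t *\<^sub>R X) $ 2) ^ b * ((t *\<^sub>R X) $ 3) ^ k * ((t *\<^sub>R X) $ 4) ^ l =
         t ^ m * (c (a, b, k, l) * X $ 1 ^ a * X $ 2 ^ b * X $ 3 ^ k * X $ 4 ^ l)"
      by (simp add: power_mult_distrib power_add)
  qed
  also have "\<dots> = t^m * f X" using S(3) by (simp add: sum_distrib_left case_prod_beta)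
  finally show ?thesis .
qed

lemma partial_frechet:
  assumes "(f has_derivative D) (at X)"
  shows "partial4 f j X = D (axis j 1)"
proof -
  have "((\<lambda>t. f (X + t *\<^sub>R axis j 1)) has_derivative (\<lambda>t. D (t *\<^sub>R axis j 1))) (at 0)"
  proof -
    have l: "((\<lambda>t. X + t *\<^sub>R axis j 1) has_derivative (\<lambda>t. t *\<^sub>R axis j 1)) (at 0)"
      by (auto intro!: derivative_eq_intros)
    have D': "(f has_derivative D) (at (X + 0 *\<^sub>R axis j 1))" using assms by simp
    show ?thesis using has_derivative_compose[OF l D'] .
  qed
  moreover have "(\<lambda>t. D (t *\<^sub>R axis j 1)) = (*) (D (axis j 1))"
    using has_derivative_linear[OF assms] by (auto simp: linear_scale)
  ultimately have "((\<lambda>t. f (X + t *\<^sub>R axis j 1)) has_real_derivative D (axis j 1)) (at 0)"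
    by (simp add: has_field_derivative_def)
  then show ?thesis unfolding partial4_def by (rule DERIV_imp_deriv)
qed

lemma partial_line:
  assumes "f differentiable (at X)"
  shows "((\<lambda>t. f (X + t *\<^sub>R axis j 1)) has_real_derivative partial4 f j X) (at 0)"
proof -
  obtain D where D: "(f has_derivative D) (at X)" using assms differentiable_def by blast
  have "((\<lambda>t. f (X + t *\<^sub>R axis j 1)) has_derivative (\<lambda>t. D (t *\<^sub>R axis j 1))) (at 0)"
  proof -
    have l: "((\<lambda>t. X + t *\<^sub>R axis j 1) has_derivative (\<lambda>t. t *\<^sub>R axis j 1)) (at 0)"
      by (auto intro!: derivative_eq_intros)
    have D': "(f has_derivative D) (at (X + 0 *\<^sub>R axis j 1))" using D by simp
    show ?thesis using has_derivative_compose[OF l D'] .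
  qed
  moreover have "(\<lambda>t. D (t *\<^sub>R axis j 1)) = (*) (D (axis j 1))"
    using has_derivative_linear[OF D] by (auto simp: linear_scale)
  ultimately show ?thesis using partial_frechet[OF D] by (simp add: has_field_derivative_def)
qed

lemma euler:
  assumes "hom_poly4 m f"
  shows "X$1 * partial4 f 1 X + X$2 * partial4 f 2 X + X$3 * partial4 f 3 X + X$4 * partial4 f 4 X = real m * f X"
proof -
  obtain D where D: "(f has_derivative D) (at X)" using hom_diff[OF assms] differentiable_def by blast
  have lin: "linear D" using has_derivative_linear[OF D] .
  have X: "X = X$1 *\<^sub>R axis 1 1 + X$2 *\<^sub>R axis 2 1 + X$3 *\<^sub>R axis 3 1 + X$4 *\<^sub>R axis 4 1"
    by (simp add: vec_eq_iff forall_4 axis_def)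
  have DX: "D X = X$1 * D (axis 1 1) + X$2 * D (axis 2 1) + X$3 * D (axis 3 1) + X$4 * D (axis 4 1)"
    by (subst X) (simp add: linear_add[OF lin] linear_scale[OF lin])
  have "((\<lambda>t. f (t *\<^sub>R X)) has_derivative (\<lambda>s. D (s *\<^sub>R X))) (at 1)"
  proof -
    have l: "((\<lambda>t. t *\<^sub>R X) has_derivative (\<lambda>s. s *\<^sub>R X)) (at 1)"
      by (auto intro!: derivative_eq_intros)
    have D': "(f has_derivative D) (at (1 *\<^sub>R X))" using D by simp
    show ?thesis using has_derivative_compose[OF l D'] .
  qed
  moreover have "(\<lambda>s. D (s *\<^sub>R X)) = (*) (D X)"
    using lin by (auto simp: linear_scale)
  ultimately have d1: "((\<lambda>t. f (t *\<^sub>R X)) has_real_derivative D X) (at 1)"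
    by (simp add: has_field_derivative_def)
  have "(\<lambda>t. f (t *\<^sub>R X)) = (\<lambda>t. t^m * f X)" using hom_scale[OF assms] by auto
  moreover have "((\<lambda>t. t^m * f X) has_real_derivative real m * f X) (at 1)"
    by (auto intro!: derivative_eq_intros)
  ultimately have "D X = real m * f X" using d1 DERIV_unique by metis
  then show ?thesis using DX partial_frechet[OF D] by simp
qed

lemma rel:
  assumes "f differentiable (at X)" "g differentiable (at X)"
    and "\<forall>Y. Y$i * f Y = Y$k * g Y"
  shows "axis j 1 $ i * f X + X$i * partial4 f j X = axis j 1 $ k * g X + X$k * partial4 g j X"
proof -
  have l: "((\<lambda>t. (X + t *\<^sub>R axis j 1)$i) has_real_derivative axis j 1 $ i) (at 0)"
    by (auto intro!: derivative_eq_intros)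
  have A: "((\<lambda>t. (X + t *\<^sub>R axis j 1)$i * f (X + t *\<^sub>R axis j 1)) has_real_derivative
      axis j 1 $ i * f X + X$i * partial4 f j X) (at 0)"
    using DERIV_mult[OF l partial_line[OF assms(1), of j]] by (simp add: mult.commute)
  have l2: "((\<lambda>t. (X + t *\<^sub>R axis j 1)$k) has_real_derivative axis j 1 $ k) (at 0)"
    by (auto intro!: derivative_eq_intros)
  have B: "((\<lambda>t. (X + t *\<^sub>R axis j 1)$k * g (X + t *\<^sub>R axis j 1)) has_real_derivative
      axis j 1 $ k * g X + X$k * partial4 g j X) (at 0)"
    using DERIV_mult[OF l2 partial_line[OF assms(2), of j]] by (simp add: mult.commute)
  have e: "\<And>t. (X + t *\<^sub>R axis j 1)$i * f (X + t *\<^sub>R axis j 1) = (X + t *\<^sub>R axis j 1)$k * g (X + t *\<^sub>R axis j 1)"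
    by (rule spec[OF assms(3)])
  have E: "(\<lambda>t. (X + t *\<^sub>R axis j 1)$i * f (X + t *\<^sub>R axis j 1)) = (\<lambda>t. (X + t *\<^sub>R axis j 1)$k * g (X + t *\<^sub>R axis j 1))"
    by (rule ext) (rule e)
  show ?thesis using A B unfolding E by (rule DERIV_unique)
qed
lemma alg:
  fixes x y z w m uu vv pp qq U1 U2 U3 U4 V1 V2 V3 V4 P1 P2 P3 P4 Q1 Q2 Q3 Q4 :: real
  assumes y: "y \<noteq> 0"
  and eu: "x*U1 + y*U2 + z*U3 + w*U4 = m* uu"
  and ev: "x*V1 + y*V2 + z*V3 + w*V4 = m* vv"
  and pp: "y*pp = z* vv" and qq: "y*qq = w* vv"
  and p1: "y*P1 = z*V1" and p2: "y*P2 = z*V2 - pp" and p3: "y*P3 = vv + z*V3" and p4: "y*P4 = z*V4"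
  and q1: "y*Q1 = w*V1" and q2: "y*Q2 = w*V2 - qq" and q3: "y*Q3 = w*V3" and q4: "y*Q4 = vv + w*V4"
  shows "U1*(V2*P3*Q4 + V3*P4*Q2 + V4*P2*Q3 - V2*P4*Q3 - V3*P2*Q4 - V4*P3*Q2)
-U2*(V1*P3*Q4 + V3*P4*Q1 + V4*P1*Q3 - V1*P4*Q3 - V3*P1*Q4 - V4*P3*Q1)
+U3*(V1*P2*Q4 + V2*P4*Q1 + V4*P1*Q2 - V1*P4*Q2 - V2*P1*Q4 - V4*P2*Q1)
-U4*(V1*P2*Q3 + V2*P3*Q1 + V3*P1*Q2 - V1*P3*Q2 - V2*P1*Q3 - V3*P2*Q1)
 = m * vv^2 * (vv*U1 - uu*V1) / y^3"
proof -
  have U2: "U2 = (m* uu - x*U1 - z*U3 - w*U4)/y" using eu y by (simp add: field_simps)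
  have V2: "V2 = (m* vv - x*V1 - z*V3 - w*V4)/y" using ev y by (simp add: field_simps)
  have pp': "pp = z* vv/y" using pp y by (simp add: field_simps)
  have qq': "qq = w* vv/y" using qq y by (simp add: field_simps)
  have P: "P1 = z*V1/y" "P2 = (z*V2 - pp)/y" "P3 = (vv + z*V3)/y" "P4 = z*V4/y"
    using p1 p2 p3 p4 y by (simp_all add: field_simps)
  have Q: "Q1 = w*V1/y" "Q2 = (w*V2 - qq)/y" "Q3 = w*V3/y" "Q4 = (vv + w*V4)/y"
    using q1 q2 q3 q4 y by (simp_all add: field_simps)
  show ?thesis unfolding P Q pp' qq' U2 V2 using y
    by (simp add: field_simps) algebra
qed

theorem lemma3p1:
  fixes m :: nat and u v p q :: "real^4 \<Rightarrow> real" and X :: "real^4"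
  assumes "m \<ge> 1"
    and "hom_poly4 m u" and "hom_poly4 m v" and "hom_poly4 m p" and "hom_poly4 m q"
    and "\<forall>Y. Y$2 * p Y = Y$3 * v Y"
    and "\<forall>Y. Y$2 * q Y = Y$4 * v Y"
    and "X$2 \<noteq> 0"
  shows "det (jacobian4 (\<lambda>Y. \<chi> i. if i = 1 then u Y else if i = 2 then v Y
                                     else if i = 3 then p Y else q Y) X)
         = real m * (v X)^2 * (v X * partial4 u 1 X - u X * partial4 v 1 X) / (X$2)^3"
proof -
  have du: "u differentiable (at X)" using hom_diff[OF assms(2)] .
  have dv: "v differentiable (at X)" using hom_diff[OF assms(3)] .
  have dp: "p differentiable (at X)" using hom_diff[OF assms(4)] .
  have dq: "q differentiable (at X)" using hom_diff[OF assms(5)] .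
  have f1: "(\<lambda>Y. (\<chi> i. if i = 1 then u Y else if i = 2 then v Y
                                     else if i = 3 then p Y else q Y) $ (1::4)) = u" by simp
  have f2: "(\<lambda>Y. (\<chi> i. if i = 1 then u Y else if i = 2 then v Y
                                     else if i = 3 then p Y else q Y) $ (2::4)) = v" by simp
  have f3: "(\<lambda>Y. (\<chi> i. if i = 1 then u Y else if i = 2 then v Y
                                     else if i = 3 then p Y else q Y) $ (3::4)) = p" by simp
  have f4: "(\<lambda>Y. (\<chi> i. if i = 1 then u Y else if i = 2 then v Y
                                     else if i = 3 then p Y else q Y) $ (4::4)) = q" by simp
  have neq: "((2::4) = 1) = False" "((3::4) = 1) = False" "((4::4) = 1) = False"
     "((3::4) = 2) = False" "((4::4) = 2) = False" "((4::4) = 3) = False" by simp_all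
  have rp: "\<And>j. axis j 1 $ 2 * p X + X$2 * partial4 p j X = axis j 1 $ 3 * v X + X$3 * partial4 v j X"
    by (rule rel[OF dp dv assms(6)])
  have rq: "\<And>j. axis j 1 $ 2 * q X + X$2 * partial4 q j X = axis j 1 $ 4 * v X + X$4 * partial4 v j X"
    by (rule rel[OF dq dv assms(7)])
  have p1: "X$2 * partial4 p 1 X = X$3 * partial4 v 1 X" using rp[of 1] by (simp add: axis_def)
  have p2: "X$2 * partial4 p 2 X = X$3 * partial4 v 2 X - p X" using rp[of 2] by (simp add: axis_def)
  have p3: "X$2 * partial4 p 3 X = v X + X$3 * partial4 v 3 X" using rp[of 3] by (simp add: axis_def)
  have p4: "X$2 * partial4 p 4 X = X$3 * partial4 v 4 X" using rp[of 4] by (simp add: axis_def)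
  have q1: "X$2 * partial4 q 1 X = X$4 * partial4 v 1 X" using rq[of 1] by (simp add: axis_def)
  have q2: "X$2 * partial4 q 2 X = X$4 * partial4 v 2 X - q X" using rq[of 2] by (simp add: axis_def)
  have q3: "X$2 * partial4 q 3 X = X$4 * partial4 v 3 X" using rq[of 3] by (simp add: axis_def)
  have q4: "X$2 * partial4 q 4 X = v X + X$4 * partial4 v 4 X" using rq[of 4] by (simp add: axis_def)
  show ?thesis
    unfolding det_4 jacobian4_def vec_lambda_beta
    apply (simp only: neq if_True if_False simp_thms refl)
    by (rule alg[OF assms(8) euler[OF assms(2)] euler[OF assms(3)] spec[OF assms(6)] spec[OF assms(7)]
          p1 p2 p3 p4 q1 q2 q3 q4])
qed

end
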